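(* Let $g\ge0$, $n\ge1$, $d\geq 1$ an integer and $S_1,\dots,S_d\subseteq\{1,\dots,n\}$. Let $Ch$ be a chamber such that $\sum_{i\in S_j}a_i<1$ for every $(a_1,\dots,a_n)\in Ch$ and every $j=1,\dots,d$. Let $\mathcal{R}=(r_1,\dots,r_n)$ be a weight datum such that $\sum_{i\in S_j}r_i=1$ for every $j=1,\dots,d$, while for every wall-indexing set $S\neq S_j$ (all $j$), $\mathcal{R}$ belongs to the half-space determined by the hyperplane $\sum_{i\in S}x_i=1$ that contains $Ch$. Then $\mathcal{G}_{g,\mathcal{A}}=\mathcal{G}_{g,\mathcal{R}}$ for every $\mathcal{A}\in Ch$.
   Context: A weight datum is $\mathcal{A}=(a_1,\dots,a_n)$ with $a_i\in\mathbb{Q}\cap(0,1]$ and $2g-2+\sum_i a_i>0$; $\mathcal{D}_{g,n}\subset\mathbb{R}^n$ is the set of weight data. For $S\subseteq\{1,\dots,n\}$ with $2\le|S|\le n$ if $g\ge1$ (resp. $2\le|S|\le n-2$ if $g=0$) (a wall-indexing set), the wall $w_S$ is the locus $\sum_{i\in S}a_i=1$ in $\mathcal{D}_{g,n}$. Chambers are the connected components of the complement in $\mathcal{D}_{g,n}$ of the union of all walls. A $(g,\mathcal{A})$-stable graph is a finite connected graph $G$ (loops and multiple edges allowed) with vertex weight $w:V(G)\to\mathbb{Z}_{\ge0}$ and $n$ legs labelled $1,\dots,n$ attached via $m:\{1,\dots,n\}\to V(G)$, with $b_1(G)+\sum_v w(v)=g$ and $2w(v)-2+|v|_E+|v|_{\mathcal{A}}>0$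 for every vertex $v$, where $|v|_E$ is the number of edge half-edges at $v$ (loops counted twice) and $|v|_{\mathcal{A}}=\sum_{m(i)=v}a_i$. $\mathcal{G}_{g,\mathcal{A}}$ is the category whose objects are $(g,\mathcal{A})$-stable graphs and whose morphisms are compositions of isomorphisms of weighted marked graphs and weighted edge contractions. *)

theory Defs
  imports "HOL-Analysis.Analysis"
begin

text \<open>Points of R^n are functions nat => real supported on {1..n}
  (product topology; this subspace is homeomorphic to R^n).\<close>

definition weight_datum :: "nat \<Rightarrow> nat \<Rightarrow> (nat \<Rightarrow> real) \<Rightarrow> bool" where
  "weight_datum g n a \<longleftrightarrow>
     (\<forall>i\<in>{1..n}. a i \<in> \<rat> \<and> 0 < a i \<and> a i \<le> 1) \<and>
     2 * real g - 2 + (\<Sum>i\<in>{1..n}. a i) > 0"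

definition Dreal :: "nat \<Rightarrow> nat \<Rightarrow> (nat \<Rightarrow> real) set" where
  "Dreal g n = {a. (\<forall>i\<in>{1..n}. 0 < a i \<and> a i \<le> 1) \<and> (\<forall>i. i \<notin> {1..n} \<longrightarrow> a i = 0) \<and>
                   2 * real g - 2 + (\<Sum>i\<in>{1..n}. a i) > 0}"

definition wall_index :: "nat \<Rightarrow> nat \<Rightarrow> nat set \<Rightarrow> bool" where
  "wall_index g n S \<longleftrightarrow> S \<subseteq> {1..n} \<and> 2 \<le> card S \<and>
     (if g = 0 then card S + 2 \<le> n else card S \<le> n)"

definition wall :: "nat \<Rightarrow> nat \<Rightarrow> nat set \<Rightarrow> (nat \<Rightarrow> real) set" where
  "wall g n S = {a \<in> Dreal g n. (\<Sum>i\<in>S. a i) = 1}"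

definition chamber :: "nat \<Rightarrow> nat \<Rightarrow> (nat \<Rightarrow> real) set \<Rightarrow> bool" where
  "chamber g n C \<longleftrightarrow>
     (let U = Dreal g n - (\<Union>S\<in>{S. wall_index g n S}. wall g n S)
      in \<exists>x\<in>U. C = connected_component_set U x)"

record sgraph =
  gV :: "nat set"
  gE :: "nat set"
  gend :: "nat \<Rightarrow> nat \<times> nat"   \<comment> \<open>endpoints of an (unoriented) edge\<close>
  gw :: "nat \<Rightarrow> nat"
  gleg :: "nat \<Rightarrow> nat"         \<comment> \<open>leg i attached at vertex gleg i\<close>

definition wf_graph :: "nat \<Rightarrow> sgraph \<Rightarrow> bool" where
  "wf_graph n G \<longleftrightarrow> finite (gV G) \<and> finite (gE G) \<and> gV G \<noteq> {} \<and>
     (\<forall>e\<in>gE G. fst (gend G e) \<in> gV G \<and> snd (gend G e) \<in> gV G) \<and>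
     (\<forall>i\<in>{1..n}. gleg G i \<in> gV G)"

definition adj :: "sgraph \<Rightarrow> (nat \<times> nat) set" where
  "adj G = {(x, y). \<exists>e\<in>gE G. gend G e = (x, y) \<or> gend G e = (y, x)}"

definition graph_connected :: "sgraph \<Rightarrow> bool" where
  "graph_connected G \<longleftrightarrow> (\<forall>u\<in>gV G. \<forall>v\<in>gV G. (u, v) \<in> (adj G)\<^sup>*)"

text \<open>Number of edge half-edges at v (loops counted twice).\<close>
definition edeg :: "sgraph \<Rightarrow> nat \<Rightarrow> nat" where
  "edeg G v = card {e \<in> gE G. fst (gend G e) = v} + card {e \<in> gE G. snd (gend G e) = v}"

definition betti1 :: "sgraph \<Rightarrow> int" where
  "betti1 G = int (card (gE G)) - int (card (gV G)) + 1"

definition legw :: "nat \<Rightarrow> (nat \<Rightarrow> real) \<Rightarrow> sgraph \<Rightarrow> nat \<Rightarrow> real" where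
  "legw n a G v = (\<Sum>i\<in>{i\<in>{1..n}. gleg G i = v}. a i)"

definition stable_graph :: "nat \<Rightarrow> nat \<Rightarrow> (nat \<Rightarrow> real) \<Rightarrow> sgraph \<Rightarrow> bool" where
  "stable_graph g n a G \<longleftrightarrow> wf_graph n G \<and> graph_connected G \<and>
     betti1 G + int (\<Sum>v\<in>gV G. gw G v) = int g \<and>
     (\<forall>v\<in>gV G. 2 * real (gw G v) - 2 + real (edeg G v) + legw n a G v > 0)"

definition graph_iso :: "nat \<Rightarrow> sgraph \<Rightarrow> sgraph \<Rightarrow> (nat \<Rightarrow> nat) \<Rightarrow> (nat \<Rightarrow> nat) \<Rightarrow> bool" where
  "graph_iso n G G' f h \<longleftrightarrow> bij_betw f (gV G) (gV G') \<and> bij_betw h (gE G) (gE G') \<and>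
     (\<forall>v\<in>gV G. gw G' (f v) = gw G v) \<and>
     (\<forall>e\<in>gE G. gend G' (h e) = (f (fst (gend G e)), f (snd (gend G e))) \<or>
                gend G' (h e) = (f (snd (gend G e)), f (fst (gend G e)))) \<and>
     (\<forall>i\<in>{1..n}. gleg G' i = f (gleg G i))"

text \<open>Weighted contraction of edge e: a loop raises the weight of its vertex by one;
  a non-loop edge (u,v) merges v into u, adding weights.\<close>
definition contract :: "sgraph \<Rightarrow> nat \<Rightarrow> sgraph" where
  "contract G e = (let (u, v) = gend G e in
     if u = v then G\<lparr>gE := gE G - {e}, gw := (gw G)(u := gw G u + 1)\<rparr>
     else (let \<sigma> = (\<lambda>x. if x = v then u else x) in
       \<lparr>gV = gV G - {v}, gE = gE G - {e}, gend = map_prod \<sigma> \<sigma> \<circ> gend G,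
        gw = (gw G)(u := gw G u + gw G v), gleg = \<sigma> \<circ> gleg G\<rparr>))"

datatype step = IsoStep sgraph sgraph "nat \<Rightarrow> nat" "nat \<Rightarrow> nat" | ContrStep sgraph nat

fun step_src :: "step \<Rightarrow> sgraph" where
  "step_src (IsoStep G G' f h) = G"
| "step_src (ContrStep G e) = G"

fun step_tgt :: "step \<Rightarrow> sgraph" where
  "step_tgt (IsoStep G G' f h) = G'"
| "step_tgt (ContrStep G e) = contract G e"

fun valid_step :: "nat \<Rightarrow> nat \<Rightarrow> (nat \<Rightarrow> real) \<Rightarrow> step \<Rightarrow> bool" where
  "valid_step g n a (IsoStep G G' f h) \<longleftrightarrow>
     stable_graph g n a G \<and> stable_graph g n a G' \<and> graph_iso n G G' f h"
| "valid_step g n a (ContrStep G e) \<longleftrightarrow>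
     stable_graph g n a G \<and> e \<in> gE G \<and> stable_graph g n a (contract G e)"

fun step_chain :: "sgraph \<Rightarrow> step list \<Rightarrow> sgraph \<Rightarrow> bool" where
  "step_chain G [] G' \<longleftrightarrow> G = G'"
| "step_chain G (s # ss) G' \<longleftrightarrow> step_src s = G \<and> step_chain (step_tgt s) ss G'"

text \<open>The category G_{g,A}: objects = (g,A)-stable graphs; morphisms = composites
  (source, word of elementary isomorphisms/contractions inside the category, target).\<close>
definition Gcat :: "nat \<Rightarrow> nat \<Rightarrow> (nat \<Rightarrow> real) \<Rightarrow>
    sgraph set \<times> (sgraph \<times> step list \<times> sgraph) set" where
  "Gcat g n a = ({G. stable_graph g n a G},
     {(G, ss, G'). stable_graph g n a G \<and> step_chain G ss G' \<and> (\<forall>s\<in>set ss. valid_step g n a s)})"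

end

theory Submission
  imports Defs
begin

lemma sum_le_card_real:
  fixes n :: nat
  assumes "T \<subseteq> {1..n}" "\<forall>i\<in>{1..n}. 0 < A i \<and> A i \<le> (1::real)"
  shows "sum A T \<le> real (card T)"
proof -
  have "sum A T \<le> sum (\<lambda>_. 1) T"
    by (rule sum_mono) (use assms in auto)
  then show ?thesis by simp
qed

lemma sum_pos_real:
  fixes n :: nat
  assumes "T \<subseteq> {1..n}" "T \<noteq> {}" "\<forall>i\<in>{1..n}. 0 < A i \<and> A i \<le> (1::real)"
  shows "sum A T > 0"
proof -
  have fin: "finite T" using assms(1) by (rule finite_subset) simp
  have "\<And>i. i \<in> T \<Longrightarrow> 0 < A i" using assms(1,3) by blast
  then show ?thesis using sum_pos[OF fin assms(2)] by blast
qed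

lemma sum_nonneg_real:
  fixes n :: nat
  assumes "T \<subseteq> {1..n}" "\<forall>i\<in>{1..n}. 0 < A i \<and> A i \<le> (1::real)"
  shows "sum A T \<ge> 0"
proof -
  have "\<And>i. i \<in> T \<Longrightarrow> 0 \<le> A i" using assms by (meson less_imp_le subsetD)
  then show ?thesis by (rule sum_nonneg)
qed

lemma edeg_zero_single:
  assumes wf: "wf_graph n G" and con: "graph_connected G" and v: "v \<in> gV G"
    and e0: "edeg G v = 0"
  shows "gV G = {v} \<and> gE G = {}"
proof -
  have finE: "finite (gE G)" using wf unfolding wf_graph_def by auto
  have noe: "\<forall>e\<in>gE G. fst (gend G e) \<noteq> v \<and> snd (gend G e) \<noteq> v"
  proof
    fix e assume e: "e \<in> gE G"
    have "card {e \<in> gE G. fst (gend G e) = v} = 0" "card {e \<in> gE G. snd (gend G e) = v} = 0"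
      using e0 unfolding edeg_def by auto
    then have "{e \<in> gE G. fst (gend G e) = v} = {}" "{e \<in> gE G. snd (gend G e) = v} = {}"
      using finE by auto
    then show "fst (gend G e) \<noteq> v \<and> snd (gend G e) \<noteq> v" using e by auto
  qed
  have V: "gV G = {v}"
  proof (rule ccontr)
    assume "gV G \<noteq> {v}"
    then obtain u where u: "u \<in> gV G" "u \<noteq> v" using v by auto
    then have "(v, u) \<in> (adj G)\<^sup>*" using con v unfolding graph_connected_def by auto
    then obtain y where "(v, y) \<in> adj G" using u(2)
      by (metis converse_rtranclE)
    then obtain e where "e \<in> gE G" "gend G e = (v, y) \<or> gend G e = (y, v)"
      unfolding adj_def by auto
    then show False using noe by force
  qed
  have "gE G = {}"
  proof (rule ccontr)
    assume "gE G \<noteq> {}"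
    then obtain e where e: "e \<in> gE G" by auto
    then have "fst (gend G e) \<in> gV G" using wf unfolding wf_graph_def by auto
    then show False using V noe e by auto
  qed
  then show ?thesis using V by simp
qed

lemma stable_iff:
  assumes posA: "\<forall>i\<in>{1..n}. 0 < A i \<and> A i \<le> (1::real)"
    and posR: "\<forall>i\<in>{1..n}. 0 < R i \<and> R i \<le> (1::real)"
    and totA: "2 * real g - 2 + (\<Sum>i\<in>{1..n}. A i) > 0"
    and totR: "2 * real g - 2 + (\<Sum>i\<in>{1..n}. R i) > 0"
    and T1: "\<forall>T\<subseteq>{1..n}. (1 < sum A T) = (1 < sum R T)"
  shows "stable_graph g n A G = stable_graph g n R G"
proof -
  have main: "(2 * real (gw G v) - 2 + real (edeg G v) + legw n A G v > 0) =
              (2 * real (gw G v) - 2 + real (edeg G v) + legw n R G v > 0)"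
    if wf: "wf_graph n G" and con: "graph_connected G"
      and bet: "betti1 G + int (\<Sum>v\<in>gV G. gw G v) = int g" and v: "v \<in> gV G" for v
  proof -
    define T where "T = {i\<in>{1..n}. gleg G i = v}"
    have Tsub: "T \<subseteq> {1..n}" unfolding T_def by auto
    have lA: "legw n A G v = sum A T" and lR: "legw n R G v = sum R T"
      unfolding legw_def T_def by auto
    have nnA: "sum A T \<ge> 0" using sum_nonneg_real[OF Tsub posA] .
    have nnR: "sum R T \<ge> 0" using sum_nonneg_real[OF Tsub posR] .
    consider "2 * gw G v + edeg G v \<ge> 3" | "2 * gw G v + edeg G v = 2"
      | "gw G v = 0" "edeg G v = 1" | "gw G v = 0" "edeg G v = 0" by linarith
    then show ?thesis
    proof cases
      case 1
      then have "2 * real (gw G v) - 2 + real (edeg G v) \<ge> 1" by linarith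
      then show ?thesis using 1 nnA nnR lA lR by auto
    next
      case 2
      then have e2: "2 * real (gw G v) - 2 + real (edeg G v) = 0" by linarith
      show ?thesis
      proof (cases "T = {}")
        case True then show ?thesis using e2 lA lR by simp
      next
        case False
        then show ?thesis using e2 lA lR sum_pos_real[OF Tsub False posA]
            sum_pos_real[OF Tsub False posR] by simp
      qed
    next
      case 3
      then show ?thesis using lA lR T1 Tsub by simp
    next
      case 4
      have s: "gV G = {v} \<and> gE G = {}" using edeg_zero_single[OF wf con v 4(2)] .
      then have "betti1 G = 0" unfolding betti1_def by simp
      then have g0: "g = 0" using bet s 4 by simp
      have "\<forall>i\<in>{1..n}. gleg G i \<in> gV G" using wf unfolding wf_graph_def by blast
      then have "\<forall>i\<in>{1..n}. gleg G i = v" using s by blast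
      then have "T = {1..n}" unfolding T_def by blast
      then have "legw n A G v = sum A {1..n}" "legw n R G v = sum R {1..n}" using lA lR by simp_all
      then show ?thesis using 4 totA totR g0 by simp
    qed
  qed
  have "(\<forall>v\<in>gV G. 2 * real (gw G v) - 2 + real (edeg G v) + legw n A G v > 0) =
        (\<forall>v\<in>gV G. 2 * real (gw G v) - 2 + real (edeg G v) + legw n R G v > 0)"
    if "wf_graph n G" "graph_connected G" "betti1 G + int (\<Sum>v\<in>gV G. gw G v) = int g"
    using main[OF that] by (rule ball_cong[OF refl])
  note X = this
  show ?thesis
  proof (cases "wf_graph n G \<and> graph_connected G \<and> betti1 G + int (\<Sum>v\<in>gV G. gw G v) = int g")
    case True
    then have Y: "(\<forall>v\<in>gV G. 2 * real (gw G v) - 2 + real (edeg G v) + legw n A G v > 0) =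
        (\<forall>v\<in>gV G. 2 * real (gw G v) - 2 + real (edeg G v) + legw n R G v > 0)"
      using True apply - apply (elim conjE) apply (rule X) apply assumption+ done
    show ?thesis unfolding stable_graph_def by (simp only: Y)
  next
    case False
    have P: "wf_graph n G \<and> graph_connected G \<and> betti1 G + int (\<Sum>v\<in>gV G. gw G v) = int g"
      if "stable_graph g n a G" for a
      using that unfolding stable_graph_def apply - apply (elim conjE) apply (intro conjI) apply assumption+ done
    show ?thesis using P[of A] P[of R] False by blast
  qed
qed

theorem mainTheorem3:
  fixes g n d :: nat and Sf :: "nat \<Rightarrow> nat set"
    and Ch :: "(nat \<Rightarrow> real) set" and R :: "nat \<Rightarrow> real"
  assumes "n \<ge> 1" and "d \<ge> 1"
    and "\<forall>j\<in>{1..d}. Sf j \<subseteq> {1..n}"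
    and "chamber g n Ch"
    and "\<forall>a\<in>Ch. \<forall>j\<in>{1..d}. (\<Sum>i\<in>Sf j. a i) < 1"
    and "weight_datum g n R"
    and "\<forall>j\<in>{1..d}. (\<Sum>i\<in>Sf j. R i) = 1"
    and "\<forall>S. wall_index g n S \<and> S \<notin> Sf ` {1..d} \<longrightarrow>
           ((\<forall>a\<in>Ch. (\<Sum>i\<in>S. a i) < 1) \<longrightarrow> (\<Sum>i\<in>S. R i) < 1) \<and>
           ((\<forall>a\<in>Ch. (\<Sum>i\<in>S. a i) > 1) \<longrightarrow> (\<Sum>i\<in>S. R i) > 1)"
  shows "\<forall>A\<in>Ch. weight_datum g n A \<longrightarrow> Gcat g n A = Gcat g n R"
proof (intro ballI impI)
  fix A assume AC: "A \<in> Ch" and wA: "weight_datum g n A"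
  define U where "U = Dreal g n - (\<Union>S\<in>{S. wall_index g n S}. wall g n S)"
  obtain x where xU: "x \<in> U" and Chx: "Ch = connected_component_set U x"
    using assms(4) unfolding chamber_def U_def Let_def by blast
  have ChU: "Ch \<subseteq> U" using Chx connected_component_subset by blast
  have conCh: "connected Ch" using Chx connected_connected_component by blast
  have posA: "\<forall>i\<in>{1..n}. 0 < A i \<and> A i \<le> (1::real)" using wA unfolding weight_datum_def by auto
  have posR: "\<forall>i\<in>{1..n}. 0 < R i \<and> R i \<le> (1::real)" using assms(6) unfolding weight_datum_def by auto
  have totA: "2 * real g - 2 + (\<Sum>i\<in>{1..n}. A i) > 0" using wA unfolding weight_datum_def by auto
  have totR: "2 * real g - 2 + (\<Sum>i\<in>{1..n}. R i) > 0" using assms(6) unfolding weight_datum_def by auto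
  have T1: "\<forall>T\<subseteq>{1..n}. (1 < sum A T) = (1 < sum R T)"
  proof (intro allI impI)
    fix T assume Tsub: "T \<subseteq> {1..n}"
    have finT: "finite T" using Tsub by (rule finite_subset) simp
    show "(1 < sum A T) = (1 < sum R T)"
    proof (cases "wall_index g n T")
      case False
      then have c: "card T < 2 \<or> (g = 0 \<and> card T + 2 > n)"
        using Tsub card_mono[OF _ Tsub] unfolding wall_index_def by (auto split: if_splits)
      show ?thesis
      proof (cases "card T < 2")
        case True
        then show ?thesis using sum_le_card_real[OF Tsub posA] sum_le_card_real[OF Tsub posR]
          by (smt (verit) One_nat_def Suc_1 less_Suc_eq_le of_nat_le_1_iff)
      next
        case False
        then have g0: "g = 0" and ct: "card T + 2 > n" using c by auto
        define C where "C = {1..n} - T"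
        have cC: "card C \<le> 1" unfolding C_def using ct card_Diff_subset[OF finT Tsub] by auto
        have Csub: "C \<subseteq> {1..n}" unfolding C_def by auto
        have split: "sum f {1..n} = sum f T + sum f C" for f :: "nat \<Rightarrow> real"
          unfolding C_def using sum.subset_diff[OF Tsub] by (simp add: add.commute)
        have "sum A C \<le> 1" using sum_le_card_real[OF Csub posA] cC by linarith
        moreover have "sum R C \<le> 1" using sum_le_card_real[OF Csub posR] cC by linarith
        ultimately show ?thesis using split[of A] split[of R] totA totR g0 by auto
      qed
    next
      case True
      note wT = True
      show ?thesis
      proof (cases "T \<in> Sf ` {1..d}")
        case True
        then obtain j where j: "j \<in> {1..d}" "T = Sf j" by auto
        then show ?thesis using assms(5,7) AC by fastforce
      next
        case False
        define f where "f = (\<lambda>a::nat\<Rightarrow>real. \<Sum>i\<in>T. a i)"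
        have ne1: "f a \<noteq> 1" if "a \<in> Ch" for a
        proof
          assume "f a = 1"
          moreover have "a \<in> Dreal g n" using that ChU unfolding U_def by auto
          ultimately have "a \<in> wall g n T" unfolding wall_def f_def by auto
          then show False using that ChU wT unfolding U_def by auto
        qed
        have "continuous_on UNIV f" unfolding f_def
          by (intro continuous_intros continuous_on_product_coordinates)
        then have contf: "continuous_on Ch f" by (rule continuous_on_subset) simp
        have conimg: "connected (f ` Ch)" by (rule connected_continuous_image[OF contf conCh])
        have side: "(\<forall>a\<in>Ch. f a < 1) \<or> (\<forall>a\<in>Ch. f a > 1)"
        proof (rule ccontr)
          assume "\<not> ?thesis"
          then obtain a b where ab: "a \<in> Ch" "b \<in> Ch" "f a \<ge> 1" "f b \<le> 1" by force
          then have "f a > 1" "f b < 1" using ne1 by force+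
          then have "1 \<in> f ` Ch"
            using connectedD_interval[OF conimg, of "f b" "f a" 1] ab by auto
          then show False using ne1 by auto
        qed
        then show ?thesis
        proof
          assume "\<forall>a\<in>Ch. f a < 1"
          then show ?thesis using assms(8) wT False AC unfolding f_def by fastforce
        next
          assume "\<forall>a\<in>Ch. f a > 1"
          then show ?thesis using assms(8) wT False AC unfolding f_def by fastforce
        qed
      qed
    qed
  qed
  have st: "\<And>G. stable_graph g n A G = stable_graph g n R G"
    by (rule stable_iff[OF posA posR totA totR T1])
  have vs: "\<And>s. valid_step g n A s = valid_step g n R s"
  proof -
    fix s show "valid_step g n A s = valid_step g n R s"
      by (cases s) (simp_all add: st)
  qed
  show "Gcat g n A = Gcat g n R" 
  proof -
    have e1: "stable_graph g n A = stable_graph g n R" by (rule ext) (rule st)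
    have e2: "valid_step g n A = valid_step g n R" by (rule ext) (rule vs)
    show ?thesis unfolding Gcat_def e1 e2 ..
  qed
qed

end
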